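(* For each $\mathbf b\in\mathcal B$, the $\mathbb C$-linear map $g_{\mathbf b}:S_0\to\mathbb C$ defined by $g_{\mathbf b}(x^u)=g^{(\mathbf b)}_u$ ($u\in M$) vanishes on $\sum_{i=1}^nD_{i,0}S_0$, and the induced functionals $\{g_{\mathbf b}\}_{\mathbf b\in\mathcal B}$ form the basis of $\mathrm{Hom}_{\mathbb C}(\mathcal W_0,\mathbb C)$ dual to the basis $\{x^{\mathbf b}\}_{\mathbf b\in\mathcal B}$ of $\mathcal W_0$.
   Context: Let $A=\{\mathbf a_1,\dots,\mathbf a_m\}\subseteq\mathbb Z^n$ be linearly independent over $\mathbb R$ and $\ell_1,\dots,\ell_m$ positive integers (part of a relation $\ell_0\mathbf a_0=\sum_j\ell_j\mathbf a_j$, $\ell_0=\sum_j\ell_j$, $\mathbf a_0\in\mathbb Z^n$, $\gcd(\ell_0,\dots,\ell_m)=1$). Let $f_0=\sum_{j=1}^m\ell_jx^{\mathbf a_j}$. Let $V$ be the real span of $A$, $V_{\mathbb Z}=V\cap\mathbb Z^n$, $C(A)$ the real cone generated by $A$, $M=V_{\mathbb Z}\cap C(A)$. Let $S_0$ be the $\mathbb C$-span of $\{x^u:u\in M\}$, $D_{i,0}=x_i\partial/\partial x_i+x_i\partial f_0/\partial x_i$ ($i=1,\dots,n$), and $\mathcal W_0=S_0/\sum_iD_{i,0}S_0$ (which has basis $\{x^{\mathbf b}:\mathbf b\in\mathcal B\}$). Let $P(A)=\{\sum_jc_j\mathbf a_j:0\le c_j<1\}$ and $\mathcal B=V_{\mathbb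 Z}\cap P(A)$. For $z\in\mathbb C$, $l\in\mathbb Z$: $[z]_0=1$, $[z]_l=1/((z+1)\cdots(z+l))$ for $l>0$, $[z]_l=z(z-1)\cdots(z+l+1)$ for $l<0$. For $\mathbf b=\sum_jv_j\mathbf a_j\in\mathcal B$ ($v_j\in[0,1)$) and $u\in M$, let $g^{(\mathbf b)}_u=\prod_{j=1}^m[-v_j]_{s_j}\ell_j^{s_j}$ if $u=\sum_j(v_j-s_j)\mathbf a_j$ with all $s_j\in\mathbb Z_{\le0}$, and $g^{(\mathbf b)}_u=0$ otherwise (these are the coefficients of $\prod_j\ell_j^{v_j}g_j(\ell_jx^{\mathbf a_j})=\sum_ug^{(\mathbf b)}_ux^{-u}$, $g_j(t)=\sum_{s\le0}[-v_j]_st^{-v_j+s}$). *)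

theory Defs
  imports "HOL-Analysis.Analysis"
begin

text \<open>Exponent vectors live in int^'n (the lattice Z^n); rvec embeds them into R^n.
  The set A is given as a_1,...,a_m via a function a on the index set {1..m}.\<close>

definition rvec :: "int^'n::finite \<Rightarrow> real^'n" where
  "rvec u = (\<chi> i. real_of_int (u $ i))"

definition Vspace :: "(nat \<Rightarrow> int^'n::finite) \<Rightarrow> nat \<Rightarrow> (real^'n) set" where
  "Vspace a m = span (rvec ` a ` {1..m})"

definition coneA :: "(nat \<Rightarrow> int^'n::finite) \<Rightarrow> nat \<Rightarrow> (real^'n) set" where
  "coneA a m = {w. \<exists>c. (\<forall>j\<in>{1..m}. 0 \<le> c j) \<and> w = (\<Sum>j=1..m. c j *\<^sub>R rvec (a j))}"

definition parA :: "(nat \<Rightarrow> int^'n::finite) \<Rightarrow> nat \<Rightarrow> (real^'n) set" where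
  "parA a m = {w. \<exists>c. (\<forall>j\<in>{1..m}. 0 \<le> c j \<and> c j < 1) \<and> w = (\<Sum>j=1..m. c j *\<^sub>R rvec (a j))}"

definition Mset :: "(nat \<Rightarrow> int^'n::finite) \<Rightarrow> nat \<Rightarrow> (int^'n) set" where
  "Mset a m = {u. rvec u \<in> Vspace a m \<and> rvec u \<in> coneA a m}"

definition Bset :: "(nat \<Rightarrow> int^'n::finite) \<Rightarrow> nat \<Rightarrow> (int^'n) set" where
  "Bset a m = {u. rvec u \<in> Vspace a m \<and> rvec u \<in> parA a m}"

text \<open>S_0: Laurent polynomials sum_u h(u) x^u with finite support contained in M,
  represented by their coefficient functions.\<close>
definition S0 :: "(nat \<Rightarrow> int^'n::finite) \<Rightarrow> nat \<Rightarrow> (int^'n \<Rightarrow> complex) set" where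
  "S0 a m = {h. finite {u. h u \<noteq> 0} \<and> {u. h u \<noteq> 0} \<subseteq> Mset a m}"

definition xmon :: "int^'n::finite \<Rightarrow> (int^'n \<Rightarrow> complex)" where
  "xmon u = (\<lambda>v. if v = u then 1 else 0)"

text \<open>D_{i,0} = x_i d/dx_i + x_i (d f_0/dx_i), f_0 = sum_j l_j x^{a_j}, acting on
  coefficient functions: D_{i,0}(x^u) = u_i x^u + sum_j l_j (a_j)_i x^{u+a_j}.\<close>
definition Dop :: "(nat \<Rightarrow> int^'n::finite) \<Rightarrow> (nat \<Rightarrow> nat) \<Rightarrow> nat \<Rightarrow> 'n
                   \<Rightarrow> (int^'n \<Rightarrow> complex) \<Rightarrow> (int^'n \<Rightarrow> complex)" where
  "Dop a l m i h = (\<lambda>v. of_int (v $ i) * h v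
        + (\<Sum>j=1..m. of_nat (l j) * of_int (a j $ i) * h (v - a j)))"

definition brk :: "complex \<Rightarrow> int \<Rightarrow> complex" where
  "brk z l = (if l = 0 then 1
              else if l > 0 then 1 / (\<Prod>k=1..nat l. z + of_nat k)
              else (\<Prod>k=0..<nat (- l). z - of_nat k))"

definition gcoef :: "(nat \<Rightarrow> int^'n::finite) \<Rightarrow> (nat \<Rightarrow> nat) \<Rightarrow> nat
                     \<Rightarrow> int^'n \<Rightarrow> int^'n \<Rightarrow> complex" where
  "gcoef a l m b u =
    (let P = (\<lambda>(v::nat \<Rightarrow> real, s::nat \<Rightarrow> int).
                (\<forall>j\<in>{1..m}. 0 \<le> v j \<and> v j < 1 \<and> s j \<le> 0)
              \<and> rvec b = (\<Sum>j=1..m. v j *\<^sub>R rvec (a j))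
              \<and> rvec u = (\<Sum>j=1..m. (v j - real_of_int (s j)) *\<^sub>R rvec (a j)))
     in if \<exists>p. P p then
          (case (SOME p. P p) of (v, s) \<Rightarrow>
             \<Prod>j=1..m. brk (- complex_of_real (v j)) (s j) * (of_nat (l j)) powi (s j))
        else 0)"

definition gfun :: "(nat \<Rightarrow> int^'n::finite) \<Rightarrow> (nat \<Rightarrow> nat) \<Rightarrow> nat
                    \<Rightarrow> int^'n \<Rightarrow> (int^'n \<Rightarrow> complex) \<Rightarrow> complex" where
  "gfun a l m b h = (\<Sum>u\<in>{u. h u \<noteq> 0}. h u * gcoef a l m b u)"

end

theory Submission
  imports Defs
begin

lemma rvec_add: "rvec (u + v) = rvec u + rvec v"
  by (simp add: rvec_def vec_eq_iff)
lemma rvec_diff: "rvec (u - v) = rvec u - rvec v"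
  by (simp add: rvec_def vec_eq_iff)
lemma rvec_nth: "rvec u $ i = real_of_int (u $ i)"
  by (simp add: rvec_def)
lemma rvec_inj: "rvec u = rvec v \<Longrightarrow> u = v"
  by (simp add: rvec_def vec_eq_iff)

lemma uniq:
  fixes a :: "nat \<Rightarrow> int^'n::finite" and m :: nat
  assumes indep: "independent (rvec ` a ` {1..m})" and inj: "inj_on a {1..m}"
    and eq: "(\<Sum>j=1..m. c j *\<^sub>R rvec (a j)) = (\<Sum>j=1..m. d j *\<^sub>R rvec (a j))"
    and j: "j \<in> {1..m}"
  shows "c j = d j"
proof (rule ccontr)
  assume ne: "c j \<noteq> d j"
  let ?r = "\<lambda>j. rvec (a j)"
  have injr: "inj_on ?r {1..m}" using inj rvec_inj unfolding inj_on_def by blast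
  have S: "rvec ` a ` {1..m} = ?r ` {1..m}" by auto
  define u where "u x = c (the_inv_into {1..m} ?r x) - d (the_inv_into {1..m} ?r x)" for x
  have "(\<Sum>x\<in>?r ` {1..m}. u x *\<^sub>R x) = (\<Sum>j=1..m. u (?r j) *\<^sub>R ?r j)"
    by (rule sum.reindex[OF injr, unfolded comp_def])
  also have "\<dots> = (\<Sum>j=1..m. (c j - d j) *\<^sub>R ?r j)"
  proof (rule sum.cong)
    fix x assume "x \<in> {1..m}"
    then have "the_inv_into {1..m} ?r (?r x) = x" by (rule the_inv_into_f_f[OF injr])
    then show "u (?r x) *\<^sub>R ?r x = (c x - d x) *\<^sub>R ?r x" by (simp add: u_def)
  qed simp
  also have "\<dots> = 0" using eq by (simp add: scaleR_diff_left sum_subtractf)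
  finally have z: "(\<Sum>x\<in>?r ` {1..m}. u x *\<^sub>R x) = 0" .
  moreover have nz: "u (?r j) \<noteq> 0"
  proof -
    have "the_inv_into {1..m} ?r (?r j) = j" using j by (rule the_inv_into_f_f[OF injr])
    then show ?thesis using ne by (simp add: u_def)
  qed
  ultimately have "dependent (?r ` {1..m})"
  proof -
    have fin: "finite (?r ` {1..m})" by simp
    show ?thesis using z nz j unfolding real_vector.dependent_finite[OF fin] by blast
  qed
  with indep S show False by simp
qed

definition Pg :: "(nat \<Rightarrow> int^'n::finite) \<Rightarrow> nat \<Rightarrow> int^'n \<Rightarrow> int^'n \<Rightarrow> (nat \<Rightarrow> real) \<Rightarrow> (nat \<Rightarrow> int) \<Rightarrow> bool" where
  "Pg a m b u v s \<longleftrightarrow> (\<forall>j\<in>{1..m}. 0 \<le> v j \<and> v j < 1 \<and> s j \<le> 0)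
              \<and> rvec b = (\<Sum>j=1..m. v j *\<^sub>R rvec (a j))
              \<and> rvec u = (\<Sum>j=1..m. (v j - real_of_int (s j)) *\<^sub>R rvec (a j))"

lemma gcoef_alt: "gcoef a l m b u = (if \<exists>p. Pg a m b u (fst p) (snd p) then
   (case (SOME p. Pg a m b u (fst p) (snd p)) of (v, s) \<Rightarrow>
             \<Prod>j=1..m. brk (- complex_of_real (v j)) (s j) * (of_nat (l j)) powi (s j)) else 0)"
proof -
  have e: "(\<lambda>(v::nat \<Rightarrow> real, s::nat \<Rightarrow> int).
                (\<forall>j\<in>{1..m}. 0 \<le> v j \<and> v j < 1 \<and> s j \<le> 0)
              \<and> rvec b = (\<Sum>j=1..m. v j *\<^sub>R rvec (a j))
              \<and> rvec u = (\<Sum>j=1..m. (v j - real_of_int (s j)) *\<^sub>R rvec (a j)))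
      = (\<lambda>p. Pg a m b u (fst p) (snd p))"
    by (auto simp: Pg_def fun_eq_iff)
  show ?thesis unfolding gcoef_def Let_def e ..
qed

lemma gcoef_zero: "\<not> (\<exists>v s. Pg a m b u v s) \<Longrightarrow> gcoef a l m b u = 0"
  unfolding gcoef_alt by auto

lemma Pg_uniq:
  fixes a :: "nat \<Rightarrow> int^'n::finite" and m :: nat
  assumes indep: "independent (rvec ` a ` {1..m})" and inj: "inj_on a {1..m}"
    and P1: "Pg a m b u v s" and P2: "Pg a m b u v' s'" and j: "j \<in> {1..m}"
  shows "v' j = v j \<and> s' j = s j"
proof -
  have "v' j = v j" using P1 P2 uniq[OF indep inj _ j, of v' v] by (simp add: Pg_def)
  moreover have "v' j - real_of_int (s' j) = v j - real_of_int (s j)"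
    using P1 P2 uniq[OF indep inj _ j, of "\<lambda>j. v' j - real_of_int (s' j)" "\<lambda>j. v j - real_of_int (s j)"]
    by (simp add: Pg_def)
  ultimately show ?thesis by simp
qed

lemma gcoef_eq:
  fixes a :: "nat \<Rightarrow> int^'n::finite" and m :: nat
  assumes indep: "independent (rvec ` a ` {1..m})" and inj: "inj_on a {1..m}"
    and P: "Pg a m b u v s"
  shows "gcoef a l m b u = (\<Prod>j=1..m. brk (- complex_of_real (v j)) (s j) * (of_nat (l j)) powi (s j))"
proof -
  have ex: "\<exists>p. Pg a m b u (fst p) (snd p)" using P by (intro exI[of _ "(v, s)"]) simp
  obtain v' s' where vs: "(SOME p. Pg a m b u (fst p) (snd p)) = (v', s')" by (cases "(SOME p. Pg a m b u (fst p) (snd p))") auto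
  have P': "Pg a m b u v' s'" using someI_ex[OF ex] vs by simp
  have "gcoef a l m b u = (\<Prod>j=1..m. brk (- complex_of_real (v' j)) (s' j) * (of_nat (l j)) powi (s' j))"
    unfolding gcoef_alt using ex vs by simp
  also have "\<dots> = (\<Prod>j=1..m. brk (- complex_of_real (v j)) (s j) * (of_nat (l j)) powi (s j))"
    by (rule prod.cong) (use Pg_uniq[OF indep inj P P'] in auto)
  finally show ?thesis .
qed

lemma brk_nonpos: "s \<le> 0 \<Longrightarrow> brk z s = (\<Prod>k=0..<nat (- s). z - of_nat k)"
  by (auto simp: brk_def)

lemma brk_step: "s \<le> 0 \<Longrightarrow> brk z (s - 1) = brk z s * (z + of_int s)"
proof -
  assume s: "s \<le> 0"
  have n: "nat (- (s - 1)) = Suc (nat (- s))" using s by simp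
  have "brk z (s - 1) = (\<Prod>k=0..<nat (- (s - 1)). z - of_nat k)"
    using s by (intro brk_nonpos) simp
  also have "\<dots> = (\<Prod>k=0..<Suc (nat (- s)). z - of_nat k)" by (simp only: n)
  also have "\<dots> = brk z s * (z - of_nat (nat (- s)))" using s by (simp add: brk_nonpos)
  also have "of_nat (nat (- s)) = (- of_int s :: complex)" using s by simp
  finally show ?thesis by simp
qed

lemma prod_upd:
  fixes f :: "nat \<Rightarrow> complex"
  assumes "finite A" "k \<in> A" "y * x = z * f k"
  shows "y * (\<Prod>j\<in>A. if j = k then x else f j) = z * (\<Prod>j\<in>A. f j)"
proof -
  have "(\<Prod>j\<in>A. if j = k then x else f j) = x * (\<Prod>j\<in>A - {k}. if j = k then x else f j)"
    using prod.remove[OF assms(1,2), of "\<lambda>j. if j = k then x else f j"] by simp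
  also have "(\<Prod>j\<in>A - {k}. if j = k then x else f j) = (\<Prod>j\<in>A - {k}. f j)"
    by (rule prod.cong) auto
  finally have "y * (\<Prod>j\<in>A. if j = k then x else f j) = (y * x) * (\<Prod>j\<in>A - {k}. f j)" by (simp add: ac_simps)
  also have "\<dots> = z * (f k * (\<Prod>j\<in>A - {k}. f j))" using assms(3) by (simp add: ac_simps)
  finally show ?thesis using prod.remove[OF assms(1,2), of f] by simp
qed

lemma sum_delta_vec:
  fixes r :: "nat \<Rightarrow> real^'n::finite"
  assumes "k \<in> {1..m}"
  shows "(\<Sum>j=1..m. (w j + (if j = k then 1 else 0)) *\<^sub>R r j) = (\<Sum>j=1..m. w j *\<^sub>R r j) + r k"
proof -
  have "(\<Sum>j=1..m. (w j + (if j = k then 1 else 0)) *\<^sub>R r j)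
      = (\<Sum>j=1..m. w j *\<^sub>R r j) + (\<Sum>j=1..m. (if j = k then r j else 0))"
    by (subst sum.distrib[symmetric], rule sum.cong) (auto simp: scaleR_add_left)
  also have "(\<Sum>j=1..m. (if j = k then r j else 0)) = r k" using assms by simp
  finally show ?thesis .
qed

lemma key_identity:
  fixes a :: "nat \<Rightarrow> int^'n::finite" and m :: nat
  assumes indep: "independent (rvec ` a ` {1..m})" and inj: "inj_on a {1..m}"
    and lpos: "\<forall>j\<in>{1..m}. 0 < l j"
    and c: "\<forall>j\<in>{1..m}. 0 \<le> c j" and uc: "rvec u = (\<Sum>j=1..m. c j *\<^sub>R rvec (a j))"
  shows "of_int (u $ i) * gcoef a l m b u
     + (\<Sum>j=1..m. of_nat (l j) * of_int (a j $ i) * gcoef a l m b (u + a j)) = 0"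
proof (cases "\<exists>v s. Pg a m b u v s")
  case True
  then obtain v s where P: "Pg a m b u v s" by blast
  define F where "F j = brk (- complex_of_real (v j)) (s j) * (of_nat (l j)) powi (s j)" for j
  define G where "G = (\<Prod>j=1..m. F j)"
  have gu: "gcoef a l m b u = G" unfolding G_def F_def by (rule gcoef_eq[OF indep inj P])
  have step: "of_nat (l k) * gcoef a l m b (u + a k) = (of_int (s k) - of_real (v k)) * G"
    if k: "k \<in> {1..m}" for k
  proof -
    define s' where "s' j = s j - (if j = k then 1 else 0)" for j
    have P': "Pg a m b (u + a k) v s'"
    proof -
      have "rvec (u + a k) = (\<Sum>j=1..m. (v j - real_of_int (s j)) *\<^sub>R rvec (a j)) + rvec (a k)"
        using P by (simp add: Pg_def rvec_add)
      also have "\<dots> = (\<Sum>j=1..m. ((v j - real_of_int (s j)) + (if j = k then 1 else 0)) *\<^sub>R rvec (a j))"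
        by (rule sum_delta_vec[OF k, symmetric])
      also have "\<dots> = (\<Sum>j=1..m. (v j - real_of_int (s' j)) *\<^sub>R rvec (a j))"
        by (rule sum.cong) (auto simp: s'_def)
      finally have e: "rvec (u + a k) = (\<Sum>j=1..m. (v j - real_of_int (s' j)) *\<^sub>R rvec (a j))" .
      have "\<forall>j\<in>{1..m}. 0 \<le> v j \<and> v j < 1 \<and> s' j \<le> 0"
      proof
        fix j assume "j \<in> {1..m}"
        then have "0 \<le> v j \<and> v j < 1 \<and> s j \<le> 0" using P unfolding Pg_def by blast
        then show "0 \<le> v j \<and> v j < 1 \<and> s' j \<le> 0" unfolding s'_def by auto
      qed
      then show ?thesis using P e unfolding Pg_def by blast
    qed
    define F' where "F' = brk (- complex_of_real (v k)) (s k - 1) * (of_nat (l k)) powi (s k - 1)"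
    have "gcoef a l m b (u + a k) = (\<Prod>j=1..m. brk (- complex_of_real (v j)) (s' j) * (of_nat (l j)) powi (s' j))"
      by (rule gcoef_eq[OF indep inj P'])
    also have "\<dots> = (\<Prod>j=1..m. if j = k then F' else F j)"
      by (rule prod.cong) (auto simp: s'_def F'_def F_def)
    finally have g1: "gcoef a l m b (u + a k) = (\<Prod>j=1..m. if j = k then F' else F j)" .
    have sk: "s k \<le> 0" using P k by (auto simp: Pg_def)
    have lk: "(of_nat (l k) :: complex) \<noteq> 0" using lpos k by auto
    have pw: "of_nat (l k) * (of_nat (l k) :: complex) powi (s k - 1) = of_nat (l k) powi s k"
      using power_int_minus_mult[of "of_nat (l k) :: complex" "s k"] lk by (simp add: mult.commute)
    have "of_nat (l k) * F' = brk (- complex_of_real (v k)) (s k) * (- complex_of_real (v k) + of_int (s k))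
        * (of_nat (l k) * (of_nat (l k) :: complex) powi (s k - 1))"
      unfolding F'_def brk_step[OF sk] by (simp only: ac_simps)
    also have "\<dots> = (of_int (s k) - of_real (v k)) * F k" unfolding pw F_def by (simp add: algebra_simps)
    finally have lF: "of_nat (l k) * F' = (of_int (s k) - of_real (v k)) * F k" .
    show ?thesis unfolding g1 G_def using prod_upd[of "{1..m}" k "of_nat (l k)" F' "of_int (s k) - of_real (v k)" F] k lF by simp
  qed
  have "rvec u $ i = (\<Sum>j=1..m. (v j - real_of_int (s j)) * real_of_int (a j $ i))"
    using P by (simp add: Pg_def sum_component rvec_nth)
  then have "real_of_int (u $ i) = (\<Sum>j=1..m. (v j - real_of_int (s j)) * real_of_int (a j $ i))"
    by (simp add: rvec_nth)
  then have "complex_of_real (real_of_int (u $ i)) = complex_of_real (\<Sum>j=1..m. (v j - real_of_int (s j)) * real_of_int (a j $ i))"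
    by simp
  then have ui: "(of_int (u $ i) :: complex) = (\<Sum>j=1..m. (of_real (v j) - of_int (s j)) * of_int (a j $ i))"
    by simp
  have "(\<Sum>j=1..m. of_nat (l j) * of_int (a j $ i) * gcoef a l m b (u + a j))
      = (\<Sum>j=1..m. - ((of_real (v j) - of_int (s j)) * of_int (a j $ i) * G))"
  proof (rule sum.cong)
    fix j assume j: "j \<in> {1..m}"
    have "of_nat (l j) * of_int (a j $ i) * gcoef a l m b (u + a j) = of_int (a j $ i) * (of_nat (l j) * gcoef a l m b (u + a j))"
      by (simp add: ac_simps)
    also have "\<dots> = - ((of_real (v j) - of_int (s j)) * of_int (a j $ i) * G)"
      unfolding step[OF j] by (simp add: algebra_simps)
    finally show "of_nat (l j) * of_int (a j $ i) * gcoef a l m b (u + a j) = - ((of_real (v j) - of_int (s j)) * of_int (a j $ i) * G)" .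
  qed simp
  also have "\<dots> = - (of_int (u $ i) * G)"
    unfolding ui by (simp add: sum_distrib_right sum_negf)
  finally show ?thesis unfolding gu by simp
next
  case False
  have g0: "gcoef a l m b u = 0" by (rule gcoef_zero[OF False])
  have "gcoef a l m b (u + a k) = 0" if k: "k \<in> {1..m}" for k
  proof (rule gcoef_zero, rule notI)
    assume "\<exists>v s. Pg a m b (u + a k) v s"
    then obtain v s where P: "Pg a m b (u + a k) v s" by blast
    define s' where "s' j = s j + (if j = k then 1 else 0)" for j
    have "(\<Sum>j=1..m. (v j - real_of_int (s' j)) *\<^sub>R rvec (a j)) + rvec (a k)
        = (\<Sum>j=1..m. ((v j - real_of_int (s' j)) + (if j = k then 1 else 0)) *\<^sub>R rvec (a j))"
      by (rule sum_delta_vec[OF k, symmetric])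
    also have "\<dots> = (\<Sum>j=1..m. (v j - real_of_int (s j)) *\<^sub>R rvec (a j))"
      by (rule sum.cong) (auto simp: s'_def)
    also have "\<dots> = rvec (u + a k)" using P by (simp add: Pg_def)
    finally have e: "rvec u = (\<Sum>j=1..m. (v j - real_of_int (s' j)) *\<^sub>R rvec (a j))"
      by (simp add: rvec_add)
    have eq: "(\<Sum>j=1..m. c j *\<^sub>R rvec (a j)) = (\<Sum>j=1..m. (v j - real_of_int (s' j)) *\<^sub>R rvec (a j))"
      using uc e by (rule trans[OF sym])
    have "c k = v k - real_of_int (s' k)" using uniq[OF indep inj eq k] .
    moreover have "0 \<le> c k" using c k by blast
    moreover have vk: "0 \<le> v k \<and> v k < 1 \<and> s k \<le> 0" using P k unfolding Pg_def by blast
    ultimately have "s k + 1 \<le> 0" unfolding s'_def by simp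
    have "\<forall>j\<in>{1..m}. 0 \<le> v j \<and> v j < 1 \<and> s' j \<le> 0"
    proof
      fix j assume "j \<in> {1..m}"
      then have "0 \<le> v j \<and> v j < 1 \<and> s j \<le> 0" using P unfolding Pg_def by blast
      then show "0 \<le> v j \<and> v j < 1 \<and> s' j \<le> 0" unfolding s'_def using \<open>s k + 1 \<le> 0\<close> by auto
    qed
    then have "Pg a m b u v s'" using P e unfolding Pg_def by blast
    then show False using False by blast
  qed
  then show ?thesis using g0 by simp
qed


lemma gfun_sum:
  assumes "finite F" "{u. h u \<noteq> 0} \<subseteq> F"
  shows "gfun a l m b h = (\<Sum>u\<in>F. h u * gcoef a l m b u)"
  unfolding gfun_def by (rule sum.mono_neutral_left) (use assms in auto)

lemma M_coords:
  assumes "u \<in> Mset a m"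
  obtains c where "\<forall>j\<in>{1..m}. 0 \<le> c j" "rvec u = (\<Sum>j=1..m. c j *\<^sub>R rvec (a j))"
  using assms unfolding Mset_def coneA_def by blast

lemma gfun_Dop:
  fixes a :: "nat \<Rightarrow> int^'n::finite" and m :: nat
  assumes indep: "independent (rvec ` a ` {1..m})" and inj: "inj_on a {1..m}"
    and lpos: "\<forall>j\<in>{1..m}. 0 < l j"
    and h: "h \<in> S0 a m"
  shows "gfun a l m b (Dop a l m i h) = 0"
proof -
  define S where "S = {u. h u \<noteq> 0}"
  have finS: "finite S" and SM: "S \<subseteq> Mset a m" using h unfolding S0_def S_def by auto
  define F where "F = S \<union> (\<Union>j\<in>{1..m}. (\<lambda>u. u + a j) ` S)"
  have finF: "finite F" unfolding F_def using finS by auto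
  have suppD: "{v. Dop a l m i h v \<noteq> 0} \<subseteq> F"
  proof
    fix v assume "v \<in> {v. Dop a l m i h v \<noteq> 0}"
    then have ne: "of_int (v $ i) * h v + (\<Sum>j=1..m. of_nat (l j) * of_int (a j $ i) * h (v - a j)) \<noteq> 0"
      by (simp add: Dop_def)
    show "v \<in> F"
    proof (rule ccontr)
      assume "v \<notin> F"
      have "h v = 0" using \<open>v \<notin> F\<close> unfolding F_def S_def by auto
      moreover have "\<forall>j\<in>{1..m}. h (v - a j) = 0"
      proof
        fix j assume j: "j \<in> {1..m}"
        show "h (v - a j) = 0"
        proof (rule ccontr)
          assume "h (v - a j) \<noteq> 0"
          then have "v - a j \<in> S" by (simp add: S_def)
          then have "v \<in> (\<lambda>u. u + a j) ` S" by (rule image_eqI[rotated]) simp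
          then have "v \<in> F" using j unfolding F_def by blast
          then show False using \<open>v \<notin> F\<close> by blast
        qed
      qed
      ultimately show False using ne by simp
    qed
  qed
  have "gfun a l m b (Dop a l m i h) = (\<Sum>v\<in>F. Dop a l m i h v * gcoef a l m b v)"
    by (rule gfun_sum[OF finF suppD])
  also have "\<dots> = (\<Sum>v\<in>F. of_int (v $ i) * h v * gcoef a l m b v)
      + (\<Sum>j=1..m. of_nat (l j) * of_int (a j $ i) * (\<Sum>v\<in>F. h (v - a j) * gcoef a l m b v))"
  proof -
    have "(\<Sum>v\<in>F. Dop a l m i h v * gcoef a l m b v) = (\<Sum>v\<in>F. of_int (v $ i) * h v * gcoef a l m b v
        + (\<Sum>j=1..m. of_nat (l j) * of_int (a j $ i) * (h (v - a j) * gcoef a l m b v)))"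
      by (rule sum.cong) (simp_all add: Dop_def distrib_right sum_distrib_right mult.assoc)
    also have "\<dots> = (\<Sum>v\<in>F. of_int (v $ i) * h v * gcoef a l m b v)
        + (\<Sum>v\<in>F. \<Sum>j=1..m. of_nat (l j) * of_int (a j $ i) * (h (v - a j) * gcoef a l m b v))"
      by (rule sum.distrib)
    also have "(\<Sum>v\<in>F. \<Sum>j=1..m. of_nat (l j) * of_int (a j $ i) * (h (v - a j) * gcoef a l m b v))
       = (\<Sum>j=1..m. \<Sum>v\<in>F. of_nat (l j) * of_int (a j $ i) * (h (v - a j) * gcoef a l m b v))"
      by (rule sum.swap)
    also have "\<dots> = (\<Sum>j=1..m. of_nat (l j) * of_int (a j $ i) * (\<Sum>v\<in>F. h (v - a j) * gcoef a l m b v))"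
      by (simp add: sum_distrib_left)
    finally show ?thesis .
  qed
  also have "(\<Sum>v\<in>F. of_int (v $ i) * h v * gcoef a l m b v) = (\<Sum>u\<in>S. of_int (u $ i) * h u * gcoef a l m b u)"
    by (rule sum.mono_neutral_right) (use finF in \<open>auto simp: F_def S_def\<close>)
  also have "(\<Sum>v\<in>F. h (v - a j) * gcoef a l m b v) = (\<Sum>u\<in>S. h u * gcoef a l m b (u + a j))"
    if j: "j \<in> {1..m}" for j
  proof -
    have "(\<Sum>v\<in>F. h (v - a j) * gcoef a l m b v) = (\<Sum>v\<in>(\<lambda>u. u + a j) ` S. h (v - a j) * gcoef a l m b v)"
    proof (rule sum.mono_neutral_right[OF finF])
      show "(\<lambda>u. u + a j) ` S \<subseteq> F" using j unfolding F_def by blast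
      show "\<forall>v\<in>F - (\<lambda>u. u + a j) ` S. h (v - a j) * gcoef a l m b v = 0"
      proof
        fix v assume v: "v \<in> F - (\<lambda>u. u + a j) ` S"
        show "h (v - a j) * gcoef a l m b v = 0"
        proof (rule ccontr)
          assume "h (v - a j) * gcoef a l m b v \<noteq> 0"
          then have "v - a j \<in> S" by (simp add: S_def)
          then have "v \<in> (\<lambda>u. u + a j) ` S" by (rule image_eqI[rotated]) simp
          then show False using v by blast
        qed
      qed
    qed
    also have "\<dots> = (\<Sum>u\<in>S. h u * gcoef a l m b (u + a j))"
      by (subst sum.reindex) (auto simp: inj_on_def)
    finally show ?thesis .
  qed
  then have "(\<Sum>j=1..m. of_nat (l j) * of_int (a j $ i) * (\<Sum>v\<in>F. h (v - a j) * gcoef a l m b v))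
      = (\<Sum>j=1..m. of_nat (l j) * of_int (a j $ i) * (\<Sum>u\<in>S. h u * gcoef a l m b (u + a j)))"
    by (intro sum.cong) auto
  also have "(\<Sum>u\<in>S. of_int (u $ i) * h u * gcoef a l m b u) + \<dots>
      = (\<Sum>u\<in>S. h u * (of_int (u $ i) * gcoef a l m b u
           + (\<Sum>j=1..m. of_nat (l j) * of_int (a j $ i) * gcoef a l m b (u + a j))))"
  proof -
    have "(\<Sum>j=1..m. of_nat (l j) * of_int (a j $ i) * (\<Sum>u\<in>S. h u * gcoef a l m b (u + a j)))
        = (\<Sum>j=1..m. \<Sum>u\<in>S. h u * (of_nat (l j) * of_int (a j $ i) * gcoef a l m b (u + a j)))"
      by (simp add: sum_distrib_left ac_simps)
    also have "\<dots> = (\<Sum>u\<in>S. \<Sum>j=1..m. h u * (of_nat (l j) * of_int (a j $ i) * gcoef a l m b (u + a j)))"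
      by (rule sum.swap)
    finally show ?thesis by (simp add: distrib_left sum.distrib sum_distrib_left ac_simps)
  qed
  also have "\<dots> = 0"
  proof (rule sum.neutral, rule ballI)
    fix u assume "u \<in> S"
    then have "u \<in> Mset a m" using SM by blast
    then obtain c where "\<forall>j\<in>{1..m}. 0 \<le> c j" "rvec u = (\<Sum>j=1..m. c j *\<^sub>R rvec (a j))"
      by (rule M_coords)
    from key_identity[OF indep inj lpos this, of i b]
    show "h u * (of_int (u $ i) * gcoef a l m b u
           + (\<Sum>j=1..m. of_nat (l j) * of_int (a j $ i) * gcoef a l m b (u + a j))) = 0" by simp
  qed
  finally show ?thesis .
qed


lemma B_coords:
  assumes "u \<in> Bset a m"
  obtains c where "\<forall>j\<in>{1..m}. 0 \<le> c j \<and> c j < 1" "rvec u = (\<Sum>j=1..m. c j *\<^sub>R rvec (a j))"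
  using assms unfolding Bset_def parA_def by blast

lemma gfun_xmon: "gfun a l m b (xmon u) = gcoef a l m b u"
proof -
  have "{v. xmon u v \<noteq> 0} = {u}" by (auto simp: xmon_def)
  then show ?thesis by (simp add: gfun_def xmon_def)
qed

lemma gfun_dual:
  fixes a :: "nat \<Rightarrow> int^'n::finite" and m :: nat
  assumes indep: "independent (rvec ` a ` {1..m})" and inj: "inj_on a {1..m}"
    and b: "b \<in> Bset a m" and b': "b' \<in> Bset a m"
  shows "gfun a l m b (xmon b') = (if b = b' then 1 else 0)"
proof (cases "b = b'")
  case True
  obtain v where v: "\<forall>j\<in>{1..m}. 0 \<le> v j \<and> v j < 1" "rvec b = (\<Sum>j=1..m. v j *\<^sub>R rvec (a j))"
    using b by (rule B_coords)
  have "Pg a m b b v (\<lambda>_. 0)" using v unfolding Pg_def by simp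
  from gcoef_eq[OF indep inj this, of l] True show ?thesis by (simp add: gfun_xmon brk_def)
next
  case False
  have "gcoef a l m b b' = 0"
  proof (rule gcoef_zero, rule notI)
    assume "\<exists>v s. Pg a m b b' v s"
    then obtain v s where P: "Pg a m b b' v s" by blast
    obtain v' where v': "\<forall>j\<in>{1..m}. 0 \<le> v' j \<and> v' j < 1" "rvec b' = (\<Sum>j=1..m. v' j *\<^sub>R rvec (a j))"
      using b' by (rule B_coords)
    have "rvec b' = (\<Sum>j=1..m. (v j - real_of_int (s j)) *\<^sub>R rvec (a j))" using P by (simp add: Pg_def)
    then have eq: "(\<Sum>j=1..m. v' j *\<^sub>R rvec (a j)) = (\<Sum>j=1..m. (v j - real_of_int (s j)) *\<^sub>R rvec (a j))"
      using v'(2) by simp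
    have "(\<Sum>j=1..m. v' j *\<^sub>R rvec (a j)) = (\<Sum>j=1..m. v j *\<^sub>R rvec (a j))"
    proof (rule sum.cong)
      fix j assume j: "j \<in> {1..m}"
      have e: "v' j = v j - real_of_int (s j)" using uniq[OF indep inj eq j] .
      have "0 \<le> v j \<and> v j < 1 \<and> s j \<le> 0" using P j unfolding Pg_def by blast
      moreover have "0 \<le> v' j \<and> v' j < 1" using v' j by blast
      ultimately have "s j = 0" using e by linarith
      then show "v' j *\<^sub>R rvec (a j) = v j *\<^sub>R rvec (a j)" using e by simp
    qed simp
    then have "rvec b' = rvec b" using v'(2) P by (simp add: Pg_def)
    then show False using False rvec_inj by metis
  qed
  then show ?thesis using False by (simp add: gfun_xmon)
qed

lemma finite_B:
  fixes a :: "nat \<Rightarrow> int^'n::finite" and m :: nat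
  shows "finite (Bset a m)"
proof -
  define K where "K i = (\<Sum>j=1..m. \<bar>a j $ i\<bar>)" for i
  have "Bset a m \<subseteq> vec_lambda ` (Pi\<^sub>E UNIV (\<lambda>i. {- K i..K i}))"
  proof
    fix u assume "u \<in> Bset a m"
    then obtain c where c: "\<forall>j\<in>{1..m}. 0 \<le> c j \<and> c j < 1" "rvec u = (\<Sum>j=1..m. c j *\<^sub>R rvec (a j))"
      by (rule B_coords)
    have "\<bar>u $ i\<bar> \<le> K i" for i
    proof -
      have "real_of_int (u $ i) = (\<Sum>j=1..m. c j * real_of_int (a j $ i))"
        using arg_cong[OF c(2), of "\<lambda>x. x $ i"] by (simp add: sum_component rvec_nth)
      then have "\<bar>real_of_int (u $ i)\<bar> \<le> (\<Sum>j=1..m. \<bar>c j * real_of_int (a j $ i)\<bar>)"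
        by (simp add: sum_abs)
      also have "\<dots> \<le> (\<Sum>j=1..m. real_of_int \<bar>a j $ i\<bar>)"
      proof (rule sum_mono)
        fix j assume "j \<in> {1..m}"
        then have "0 \<le> c j \<and> c j < 1" using c(1) by blast
        then have "0 \<le> c j" "c j \<le> 1" by auto
        then show "\<bar>c j * real_of_int (a j $ i)\<bar> \<le> real_of_int \<bar>a j $ i\<bar>"
          by (simp add: abs_mult mult_left_le_one_le)
      qed
      also have "\<dots> = real_of_int (K i)" unfolding K_def by simp
      finally have "real_of_int \<bar>u $ i\<bar> \<le> real_of_int (K i)" by simp
      then show ?thesis by linarith
    qed
    then have "(\<lambda>i. u $ i) \<in> Pi\<^sub>E UNIV (\<lambda>i. {- K i..K i})"
      by (auto simp: abs_le_iff) (metis minus_le_iff)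
    then show "u \<in> vec_lambda ` (Pi\<^sub>E UNIV (\<lambda>i. {- K i..K i}))"
      by (rule image_eqI[rotated]) simp
  qed
  moreover have "finite (vec_lambda ` (Pi\<^sub>E UNIV (\<lambda>i. {- K i..K i})))"
    by (intro finite_imageI finite_PiE) auto
  ultimately show ?thesis by (rule finite_subset)
qed


lemma M_intro:
  assumes "\<forall>j\<in>{1..m}. 0 \<le> c j" "rvec u = (\<Sum>j=1..m. c j *\<^sub>R rvec (a j))"
  shows "u \<in> Mset a m"
proof -
  have "rvec u \<in> Vspace a m" unfolding assms(2) Vspace_def
    by (intro span_sum span_scale span_base) auto
  moreover have "rvec u \<in> coneA a m" unfolding coneA_def using assms by blast
  ultimately show ?thesis unfolding Mset_def by blast
qed

lemma M_add:
  assumes u: "u \<in> Mset a m" and k: "k \<in> {1..m}"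
  shows "u + a k \<in> Mset a m"
proof -
  obtain c where c: "\<forall>j\<in>{1..m}. 0 \<le> c j" "rvec u = (\<Sum>j=1..m. c j *\<^sub>R rvec (a j))"
    using u by (rule M_coords)
  have "rvec (u + a k) = (\<Sum>j=1..m. (c j + (if j = k then 1 else 0)) *\<^sub>R rvec (a j))"
    unfolding sum_delta_vec[OF k] rvec_add c(2) ..
  moreover have "\<forall>j\<in>{1..m}. 0 \<le> c j + (if j = k then 1 else 0)" using c(1) by auto
  ultimately show ?thesis by (intro M_intro) auto
qed

lemma S0_add: "h1 \<in> S0 a m \<Longrightarrow> h2 \<in> S0 a m \<Longrightarrow> (\<lambda>v. h1 v + h2 v) \<in> S0 a m"
proof -
  assume h: "h1 \<in> S0 a m" "h2 \<in> S0 a m"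
  have "{v. h1 v + h2 v \<noteq> 0} \<subseteq> {v. h1 v \<noteq> 0} \<union> {v. h2 v \<noteq> 0}" by auto
  with h show ?thesis unfolding S0_def by (auto intro: finite_subset)
qed

lemma S0_scale: "h \<in> S0 a m \<Longrightarrow> (\<lambda>v. c * h v) \<in> S0 a m"
proof -
  assume h: "h \<in> S0 a m"
  have "{v. c * h v \<noteq> 0} \<subseteq> {v. h v \<noteq> 0}" by auto
  with h show ?thesis unfolding S0_def by (auto intro: finite_subset)
qed

lemma S0_zero: "(\<lambda>v. 0) \<in> S0 a m"
  unfolding S0_def by simp

lemma xmon_S0: "u \<in> Mset a m \<Longrightarrow> xmon u \<in> S0 a m"
  unfolding S0_def xmon_def by auto

lemma S0_sum_lin:
  assumes add: "\<forall>h1\<in>S0 a m. \<forall>h2\<in>S0 a m. \<phi> (\<lambda>v. h1 v + h2 v) = \<phi> h1 + \<phi> h2"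
    and scal: "\<forall>c. \<forall>h\<in>S0 a m. \<phi> (\<lambda>v. c * h v) = c * \<phi> h"
    and fin: "finite F" and f: "\<forall>x\<in>F. f x \<in> S0 a m"
  shows "(\<lambda>v. \<Sum>x\<in>F. c x * f x v) \<in> S0 a m \<and> \<phi> (\<lambda>v. \<Sum>x\<in>F. c x * f x v) = (\<Sum>x\<in>F. c x * \<phi> (f x))"
  using fin f
proof (induction F rule: finite_induct)
  case empty
  have "\<phi> (\<lambda>v. 0) = 0" using bspec[OF spec[OF scal, of 0] S0_zero[of a m]] by simp
  then show ?case using S0_zero by simp
next
  case (insert x F)
  have IH: "(\<lambda>v. \<Sum>x\<in>F. c x * f x v) \<in> S0 a m" "\<phi> (\<lambda>v. \<Sum>x\<in>F. c x * f x v) = (\<Sum>x\<in>F. c x * \<phi> (f x))"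
    using insert by auto
  have fx: "f x \<in> S0 a m" using insert by auto
  have s1: "(\<lambda>v. c x * f x v) \<in> S0 a m" by (rule S0_scale[OF fx])
  have eq: "(\<lambda>v. \<Sum>y\<in>insert x F. c y * f y v) = (\<lambda>v. (\<lambda>v. c x * f x v) v + (\<lambda>v. \<Sum>x\<in>F. c x * f x v) v)"
    using insert by simp
  have a1: "\<phi> (\<lambda>v. (\<lambda>v. c x * f x v) v + (\<lambda>v. \<Sum>x\<in>F. c x * f x v) v)
      = \<phi> (\<lambda>v. c x * f x v) + \<phi> (\<lambda>v. \<Sum>x\<in>F. c x * f x v)"
    by (rule bspec[OF bspec[OF add s1] IH(1)])
  have a2: "\<phi> (\<lambda>v. c x * f x v) = c x * \<phi> (f x)"
    by (rule bspec[OF spec[OF scal] fx])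
  have "(\<Sum>y\<in>insert x F. c y * \<phi> (f y)) = c x * \<phi> (f x) + (\<Sum>y\<in>F. c y * \<phi> (f y))"
    using insert(1,2) by simp
  then show ?case unfolding eq a1 a2 IH(2) using S0_add[OF s1 IH(1)] by simp
qed

lemma dual_functional:
  fixes a :: "nat \<Rightarrow> int^'n::finite" and m :: nat
  assumes indep: "independent (rvec ` a ` {1..m})" and inj: "inj_on a {1..m}" and k: "k \<in> {1..m}"
  obtains lam :: "'n \<Rightarrow> real" where
    "\<forall>j\<in>{1..m}. (\<Sum>i\<in>UNIV. lam i * real_of_int (a j $ i)) = (if j = k then 1 else 0)"
proof -
  obtain g :: "real^'n \<Rightarrow> real" where g: "linear g"
    "\<forall>x\<in>rvec ` a ` {1..m}. g x = (if x = rvec (a k) then 1 else 0)"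
    using linear_independent_extend[OF indep, of "\<lambda>x. if x = rvec (a k) then 1 else 0"] by blast
  define lam where "lam i = g (axis i 1)" for i
  have "(\<Sum>i\<in>UNIV. lam i * real_of_int (a j $ i)) = (if j = k then 1 else 0)" if j: "j \<in> {1..m}" for j
  proof -
    have "rvec (a j) = (\<Sum>i\<in>UNIV. rvec (a j) $ i *s axis i 1)" by (rule basis_expansion[symmetric])
    also have "\<dots> = (\<Sum>i\<in>UNIV. real_of_int (a j $ i) *\<^sub>R axis i 1)"
      unfolding scalar_mult_eq_scaleR rvec_nth ..
    finally have rj: "rvec (a j) = (\<Sum>i\<in>UNIV. real_of_int (a j $ i) *\<^sub>R axis i 1)" .
    have "g (rvec (a j)) = (\<Sum>i\<in>UNIV. g (real_of_int (a j $ i) *\<^sub>R axis i 1))"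
      unfolding rj by (rule linear_sum[OF g(1)])
    also have "\<dots> = (\<Sum>i\<in>UNIV. real_of_int (a j $ i) * lam i)"
      by (rule sum.cong) (simp_all add: linear_scale[OF g(1)] lam_def)
    finally have gj: "g (rvec (a j)) = (\<Sum>i\<in>UNIV. real_of_int (a j $ i) * lam i)" .
    have iff: "rvec (a j) = rvec (a k) \<longleftrightarrow> j = k"
    proof
      assume "rvec (a j) = rvec (a k)"
      then have "a j = a k" by (rule rvec_inj)
      then show "j = k" using inj j k unfolding inj_on_def by blast
    qed simp
    have "rvec (a j) \<in> rvec ` a ` {1..m}" using j by blast
    then have "g (rvec (a j)) = (if rvec (a j) = rvec (a k) then 1 else 0)" using g(2) by blast
    then have "g (rvec (a j)) = (if j = k then 1 else 0)" unfolding iff .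
    with gj have "(\<Sum>i\<in>UNIV. real_of_int (a j $ i) * lam i) = (if j = k then 1 else 0)" by simp
    then show ?thesis by (simp add: mult.commute)
  qed
  then show ?thesis using that by blast
qed

lemma propagate:
  fixes a :: "nat \<Rightarrow> int^'n::finite" and m :: nat and D :: "int^'n \<Rightarrow> complex"
  assumes indep: "independent (rvec ` a ` {1..m})" and inj: "inj_on a {1..m}"
    and lpos: "\<forall>j\<in>{1..m}. 0 < l j" and k: "k \<in> {1..m}"
    and ident: "\<forall>i. of_int (w $ i) * D w + (\<Sum>j=1..m. of_nat (l j) * of_int (a j $ i) * D (w + a j)) = 0"
    and D0: "D w = 0"
  shows "D (w + a k) = 0"
proof -
  obtain lam :: "'n \<Rightarrow> real" where lam:
    "\<forall>j\<in>{1..m}. (\<Sum>i\<in>UNIV. lam i * real_of_int (a j $ i)) = (if j = k then 1 else 0)"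
    using dual_functional[OF indep inj k] by blast
  have "0 = (\<Sum>i\<in>UNIV. of_real (lam i) * (of_int (w $ i) * D w + (\<Sum>j=1..m. of_nat (l j) * of_int (a j $ i) * D (w + a j))))"
    using ident by simp
  also have "\<dots> = (\<Sum>i\<in>UNIV. \<Sum>j=1..m. of_real (lam i) * (of_nat (l j) * of_int (a j $ i) * D (w + a j)))"
    using D0 by (simp add: sum_distrib_left)
  also have "\<dots> = (\<Sum>j=1..m. \<Sum>i\<in>UNIV. of_real (lam i) * (of_nat (l j) * of_int (a j $ i) * D (w + a j)))"
    by (rule sum.swap)
  also have "\<dots> = (\<Sum>j=1..m. of_nat (l j) * D (w + a j) * of_real (\<Sum>i\<in>UNIV. lam i * real_of_int (a j $ i)))"
    by (rule sum.cong) (simp_all add: sum_distrib_left ac_simps)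
  also have "\<dots> = (\<Sum>j=1..m. if j = k then of_nat (l j) * D (w + a j) else 0)"
    by (rule sum.cong) (use lam in auto)
  also have "\<dots> = of_nat (l k) * D (w + a k)" using k by simp
  finally have "of_nat (l k) * D (w + a k) = 0" by simp
  moreover have "(of_nat (l k) :: complex) \<noteq> 0" using lpos k by auto
  ultimately show ?thesis by simp
qed


lemma Dop_xmon:
  "Dop a l m i (xmon w) = (\<lambda>v. of_int (w $ i) * xmon w v
      + (\<Sum>j=1..m. (of_nat (l j) * of_int (a j $ i)) * xmon (w + a j) v))"
proof
  fix v
  have "xmon w (v - a j) = xmon (w + a j) v" for j
    by (auto simp: xmon_def)
  moreover have "of_int (v $ i) * xmon w v = of_int (w $ i) * xmon w v" by (simp add: xmon_def)
  ultimately show "Dop a l m i (xmon w) v = of_int (w $ i) * xmon w v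
      + (\<Sum>j=1..m. (of_nat (l j) * of_int (a j $ i)) * xmon (w + a j) v)"
    by (simp add: Dop_def)
qed

lemma phi_ident:
  assumes add: "\<forall>h1\<in>S0 a m. \<forall>h2\<in>S0 a m. \<phi> (\<lambda>v. h1 v + h2 v) = \<phi> h1 + \<phi> h2"
    and scal: "\<forall>c. \<forall>h\<in>S0 a m. \<phi> (\<lambda>v. c * h v) = c * \<phi> h"
    and kill: "\<forall>i. \<forall>h\<in>S0 a m. \<phi> (Dop a l m i h) = 0"
    and w: "w \<in> Mset a m"
  shows "of_int (w $ i) * \<phi> (xmon w) + (\<Sum>j=1..m. of_nat (l j) * of_int (a j $ i) * \<phi> (xmon (w + a j))) = 0"
proof -
  have f: "\<forall>j\<in>{1..m}. xmon (w + a j) \<in> S0 a m" using M_add[OF w] xmon_S0 by blast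
  note SL = S0_sum_lin[OF add scal finite_atLeastAtMost f, of "\<lambda>j. of_nat (l j) * of_int (a j $ i)"]
  have xw: "xmon w \<in> S0 a m" by (rule xmon_S0[OF w])
  have s1: "(\<lambda>v. of_int (w $ i) * xmon w v) \<in> S0 a m" by (rule S0_scale[OF xw])
  have "0 = \<phi> (Dop a l m i (xmon w))" using kill xw by simp
  also have "\<dots> = \<phi> (\<lambda>v. (\<lambda>v. of_int (w $ i) * xmon w v) v
      + (\<lambda>v. \<Sum>j=1..m. (of_nat (l j) * of_int (a j $ i)) * xmon (w + a j) v) v)"
    unfolding Dop_xmon by simp
  also have "\<dots> = \<phi> (\<lambda>v. of_int (w $ i) * xmon w v) + \<phi> (\<lambda>v. \<Sum>j=1..m. (of_nat (l j) * of_int (a j $ i)) * xmon (w + a j) v)"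
    by (rule bspec[OF bspec[OF add s1] conjunct1[OF SL]])
  also have "\<phi> (\<lambda>v. of_int (w $ i) * xmon w v) = of_int (w $ i) * \<phi> (xmon w)"
    by (rule bspec[OF spec[OF scal] xw])
  also note conjunct2[OF SL]
  finally show ?thesis by simp
qed

lemma R_ident:
  fixes a :: "nat \<Rightarrow> int^'n::finite" and m :: nat
  assumes indep: "independent (rvec ` a ` {1..m})" and inj: "inj_on a {1..m}"
    and lpos: "\<forall>j\<in>{1..m}. 0 < l j" and w: "w \<in> Mset a m"
  shows "of_int (w $ i) * (\<Sum>b\<in>B. p b * gcoef a l m b w)
    + (\<Sum>j=1..m. of_nat (l j) * of_int (a j $ i) * (\<Sum>b\<in>B. p b * gcoef a l m b (w + a j))) = 0"
proof -
  obtain c where c: "\<forall>j\<in>{1..m}. 0 \<le> c j" "rvec w = (\<Sum>j=1..m. c j *\<^sub>R rvec (a j))"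
    using w by (rule M_coords)
  have "of_int (w $ i) * (\<Sum>b\<in>B. p b * gcoef a l m b w)
    + (\<Sum>j=1..m. of_nat (l j) * of_int (a j $ i) * (\<Sum>b\<in>B. p b * gcoef a l m b (w + a j)))
    = (\<Sum>b\<in>B. p b * (of_int (w $ i) * gcoef a l m b w
        + (\<Sum>j=1..m. of_nat (l j) * of_int (a j $ i) * gcoef a l m b (w + a j))))"
  proof -
    have "(\<Sum>j=1..m. of_nat (l j) * of_int (a j $ i) * (\<Sum>b\<in>B. p b * gcoef a l m b (w + a j)))
        = (\<Sum>j=1..m. \<Sum>b\<in>B. p b * (of_nat (l j) * of_int (a j $ i) * gcoef a l m b (w + a j)))"
      by (simp add: sum_distrib_left ac_simps)
    also have "\<dots> = (\<Sum>b\<in>B. \<Sum>j=1..m. p b * (of_nat (l j) * of_int (a j $ i) * gcoef a l m b (w + a j)))"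
      by (rule sum.swap)
    finally show ?thesis by (simp add: distrib_left sum.distrib sum_distrib_left ac_simps)
  qed
  also have "\<dots> = 0"
    using key_identity[OF indep inj lpos c, of i] by simp
  finally show ?thesis .
qed

theorem proposition3p15:
  fixes a :: "nat \<Rightarrow> int^'n::finite" and l :: "nat \<Rightarrow> nat" and m :: nat
    and a0 :: "int^'n"
  assumes indep: "independent (rvec ` a ` {1..m})"
    and distinct: "inj_on a {1..m}"
    and lpos: "\<forall>j\<in>{1..m}. 0 < l j"
    and rel: "of_nat (\<Sum>j=1..m. l j) *s a0 = (\<Sum>j=1..m. of_nat (l j) *s a j)"
    and coprime: "Gcd (insert (\<Sum>j=1..m. l j) (l ` {1..m})) = 1"
  shows "finite (Bset a m)
    \<and> (\<forall>b\<in>Bset a m. \<forall>i. \<forall>h\<in>S0 a m. gfun a l m b (Dop a l m i h) = 0)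
    \<and> (\<forall>b\<in>Bset a m. \<forall>b'\<in>Bset a m. gfun a l m b (xmon b') = (if b = b' then 1 else 0))
    \<and> (\<forall>\<phi> :: (int^'n \<Rightarrow> complex) \<Rightarrow> complex.
          (\<forall>h1\<in>S0 a m. \<forall>h2\<in>S0 a m. \<phi> (\<lambda>v. h1 v + h2 v) = \<phi> h1 + \<phi> h2)
        \<and> (\<forall>c. \<forall>h\<in>S0 a m. \<phi> (\<lambda>v. c * h v) = c * \<phi> h)
        \<and> (\<forall>i. \<forall>h\<in>S0 a m. \<phi> (Dop a l m i h) = 0)
        \<longrightarrow> (\<forall>h\<in>S0 a m. \<phi> h = (\<Sum>b\<in>Bset a m. \<phi> (xmon b) * gfun a l m b h)))"
proof -
  have finB: "finite (Bset a m)" by (rule finite_B)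
  have p2: "\<forall>b\<in>Bset a m. \<forall>i. \<forall>h\<in>S0 a m. gfun a l m b (Dop a l m i h) = 0"
    using gfun_Dop[OF indep distinct lpos] by blast
  have p3: "\<forall>b\<in>Bset a m. \<forall>b'\<in>Bset a m. gfun a l m b (xmon b') = (if b = b' then 1 else 0)"
    using gfun_dual[OF indep distinct] by blast
  have p4: "\<forall>\<phi> :: (int^'n \<Rightarrow> complex) \<Rightarrow> complex.
          (\<forall>h1\<in>S0 a m. \<forall>h2\<in>S0 a m. \<phi> (\<lambda>v. h1 v + h2 v) = \<phi> h1 + \<phi> h2)
        \<and> (\<forall>c. \<forall>h\<in>S0 a m. \<phi> (\<lambda>v. c * h v) = c * \<phi> h)
        \<and> (\<forall>i. \<forall>h\<in>S0 a m. \<phi> (Dop a l m i h) = 0)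
        \<longrightarrow> (\<forall>h\<in>S0 a m. \<phi> h = (\<Sum>b\<in>Bset a m. \<phi> (xmon b) * gfun a l m b h))"
  proof (intro allI impI, elim conjE)
    fix \<phi> :: "(int^'n \<Rightarrow> complex) \<Rightarrow> complex"
    assume add: "\<forall>h1\<in>S0 a m. \<forall>h2\<in>S0 a m. \<phi> (\<lambda>v. h1 v + h2 v) = \<phi> h1 + \<phi> h2"
      and scal: "\<forall>c. \<forall>h\<in>S0 a m. \<phi> (\<lambda>v. c * h v) = c * \<phi> h"
      and kill: "\<forall>i. \<forall>h\<in>S0 a m. \<phi> (Dop a l m i h) = 0"
    define R where "R u = (\<Sum>b\<in>Bset a m. \<phi> (xmon b) * gcoef a l m b u)" for u
    define D where "D u = \<phi> (xmon u) - R u" for u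
    have Dident: "\<forall>i. of_int (w $ i) * D w + (\<Sum>j=1..m. of_nat (l j) * of_int (a j $ i) * D (w + a j)) = 0"
      if w: "w \<in> Mset a m" for w
    proof
      fix i
      have e1: "of_int (w $ i) * \<phi> (xmon w) + (\<Sum>j=1..m. of_nat (l j) * of_int (a j $ i) * \<phi> (xmon (w + a j))) = 0"
        by (rule phi_ident[OF add scal kill w])
      have e2: "of_int (w $ i) * R w + (\<Sum>j=1..m. of_nat (l j) * of_int (a j $ i) * R (w + a j)) = 0"
        unfolding R_def by (rule R_ident[OF indep distinct lpos w])
      have "of_int (w $ i) * D w + (\<Sum>j=1..m. of_nat (l j) * of_int (a j $ i) * D (w + a j))
        = (of_int (w $ i) * \<phi> (xmon w) + (\<Sum>j=1..m. of_nat (l j) * of_int (a j $ i) * \<phi> (xmon (w + a j))))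
        - (of_int (w $ i) * R w + (\<Sum>j=1..m. of_nat (l j) * of_int (a j $ i) * R (w + a j)))"
        unfolding D_def by (simp add: right_diff_distrib sum_subtractf)
      then show "of_int (w $ i) * D w + (\<Sum>j=1..m. of_nat (l j) * of_int (a j $ i) * D (w + a j)) = 0"
        using e1 e2 by simp
    qed
    have base: "D u = 0" if u: "u \<in> Bset a m" for u
    proof -
      have "R u = (\<Sum>b\<in>Bset a m. if b = u then \<phi> (xmon b) else 0)"
        unfolding R_def
      proof (rule sum.cong)
        fix b assume b: "b \<in> Bset a m"
        have "gcoef a l m b u = (if b = u then 1 else 0)"
          using gfun_dual[OF indep distinct b u, of l] by (simp add: gfun_xmon)
        then show "\<phi> (xmon b) * gcoef a l m b u = (if b = u then \<phi> (xmon b) else 0)" by simp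
      qed simp
      also have "\<dots> = \<phi> (xmon u)" using finB u by simp
      finally show ?thesis by (simp add: D_def)
    qed
    have ind: "\<forall>u c. (\<forall>j\<in>{1..m}. 0 \<le> c j) \<and> rvec u = (\<Sum>j=1..m. c j *\<^sub>R rvec (a j))
        \<and> (\<Sum>j=1..m. nat \<lfloor>c j\<rfloor>) = N \<longrightarrow> D u = 0" for N
    proof (induction N rule: less_induct)
      case (less N)
      show ?case
      proof (intro allI impI, elim conjE)
        fix u c assume c: "\<forall>j\<in>{1..m}. 0 \<le> c j" and uc: "rvec u = (\<Sum>j=1..m. c j *\<^sub>R rvec (a j))"
          and N: "(\<Sum>j=1..m. nat \<lfloor>c j\<rfloor>) = N"
        have uM: "u \<in> Mset a m" by (rule M_intro[OF c uc])
        show "D u = 0"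
        proof (cases "\<forall>j\<in>{1..m}. c j < 1")
          case True
          have "rvec u \<in> parA a m" unfolding parA_def using c True uc by blast
          then have "u \<in> Bset a m" using uM unfolding Mset_def Bset_def by blast
          then show ?thesis by (rule base)
        next
          case False
          then obtain k where k: "k \<in> {1..m}" and ck: "1 \<le> c k" by force
          define c' where "c' j = c j - (if j = k then 1 else 0)" for j
          define w where "w = u - a k"
          have "(\<Sum>j=1..m. (c' j + (if j = k then 1 else 0)) *\<^sub>R rvec (a j))
              = (\<Sum>j=1..m. c' j *\<^sub>R rvec (a j)) + rvec (a k)"
            by (rule sum_delta_vec[OF k])
          moreover have "(\<Sum>j=1..m. (c' j + (if j = k then 1 else 0)) *\<^sub>R rvec (a j)) = rvec u"
            unfolding uc by (rule sum.cong) (simp_all add: c'_def)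
          ultimately have "(\<Sum>j=1..m. c' j *\<^sub>R rvec (a j)) + rvec (a k) = rvec u" by simp
          then have wc: "rvec w = (\<Sum>j=1..m. c' j *\<^sub>R rvec (a j))"
            unfolding w_def rvec_diff by (metis add_diff_cancel_right')
          have c'0: "\<forall>j\<in>{1..m}. 0 \<le> c' j"
          proof
            fix j assume "j \<in> {1..m}"
            then have "0 \<le> c j" using c by blast
            then show "0 \<le> c' j" using ck by (simp add: c'_def)
          qed
          have lt: "(\<Sum>j=1..m. nat \<lfloor>c' j\<rfloor>) < N"
            unfolding N[symmetric]
          proof (rule sum_strict_mono_ex1)
            show "\<forall>j\<in>{1..m}. nat \<lfloor>c' j\<rfloor> \<le> nat \<lfloor>c j\<rfloor>"
              by (auto simp: c'_def intro!: nat_mono floor_mono)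
            have "\<lfloor>c' k\<rfloor> = \<lfloor>c k\<rfloor> - 1" by (simp add: c'_def)
            moreover have "1 \<le> \<lfloor>c k\<rfloor>" using ck by simp
            ultimately have "nat \<lfloor>c' k\<rfloor> < nat \<lfloor>c k\<rfloor>" by simp
            then show "\<exists>j\<in>{1..m}. nat \<lfloor>c' j\<rfloor> < nat \<lfloor>c j\<rfloor>" using k by blast
          qed simp
          have Dw: "D w = 0" using less.IH[OF lt] c'0 wc by blast
          have wM: "w \<in> Mset a m" by (rule M_intro[OF c'0 wc])
          have "D (w + a k) = 0" by (rule propagate[OF indep distinct lpos k Dident[OF wM] Dw])
          then show ?thesis by (simp add: w_def)
        qed
      qed
    qed
    have Dzero: "D u = 0" if u: "u \<in> Mset a m" for u
    proof -
      obtain c where "\<forall>j\<in>{1..m}. 0 \<le> c j" "rvec u = (\<Sum>j=1..m. c j *\<^sub>R rvec (a j))"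
        using u by (rule M_coords)
      then show ?thesis using ind by blast
    qed
    show "\<forall>h\<in>S0 a m. \<phi> h = (\<Sum>b\<in>Bset a m. \<phi> (xmon b) * gfun a l m b h)"
    proof
      fix h assume h: "h \<in> S0 a m"
      define S where "S = {u. h u \<noteq> 0}"
      have finS: "finite S" and SM: "S \<subseteq> Mset a m" using h unfolding S0_def S_def by auto
      have hx: "h = (\<lambda>v. \<Sum>u\<in>S. h u * xmon u v)"
      proof
        fix v
        have "(\<Sum>u\<in>S. h u * xmon u v) = (\<Sum>u\<in>S. if v = u then h u else 0)"
          by (rule sum.cong) (auto simp: xmon_def)
        also have "\<dots> = (if v \<in> S then h v else 0)" using finS by simp
        also have "\<dots> = h v" by (auto simp: S_def)
        finally show "h v = (\<Sum>u\<in>S. h u * xmon u v)" by simp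
      qed
      have fS: "\<forall>u\<in>S. xmon u \<in> S0 a m" using SM xmon_S0 by blast
      have "\<phi> h = (\<Sum>u\<in>S. h u * \<phi> (xmon u))"
        using conjunct2[OF S0_sum_lin[OF add scal finS fS, of h]] hx by simp
      also have "\<dots> = (\<Sum>u\<in>S. h u * R u)"
        by (rule sum.cong) (use SM Dzero in \<open>auto simp: D_def\<close>)
      also have "\<dots> = (\<Sum>u\<in>S. \<Sum>b\<in>Bset a m. \<phi> (xmon b) * (h u * gcoef a l m b u))"
        unfolding R_def by (simp add: sum_distrib_left ac_simps)
      also have "\<dots> = (\<Sum>b\<in>Bset a m. \<Sum>u\<in>S. \<phi> (xmon b) * (h u * gcoef a l m b u))"
        by (rule sum.swap)
      also have "\<dots> = (\<Sum>b\<in>Bset a m. \<phi> (xmon b) * gfun a l m b h)"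
        unfolding gfun_def S_def by (simp add: sum_distrib_left)
      finally show "\<phi> h = (\<Sum>b\<in>Bset a m. \<phi> (xmon b) * gfun a l m b h)" .
    qed
  qed
  show ?thesis using finB p2 p3 p4 by blast
qed

end
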